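(* Let $p$ be a prime, $q=p^k$, $f(x)\in\mathbb F_q[x]$ and $a\in\mathbb F_q$. Then $\sum_{s=1}^\infty N_s(f,a)x^s$ is a rational function of $x$. More precisely, let $d:=\deg\{u_s(f,a)\}_{s=1}^\infty$ and let $A:=(u_{i+j-1}(f,a))_{1\le i,j\le d+1}$ be the $(d+1)\times(d+1)$ Hankel matrix of the sequence. Then $AX=0$ has a nonzero integer solution, and for any nonzero integer solution $X=(c_d,\dots,c_1,c_0)^T$ of $AX=0$ we have $$\sum_{s=1}^{\infty}N_{s}(f,a)x^s=\frac{x}{1-qx}+\frac{\sum_{i=1}^{d}\Big(\sum_{\substack{j+k=i\\ k\ge0,\ j\ge1}}c_k\,u_j(f,a)\Big)x^i}{\sum_{i=0}^{d}c_ix^i}.$$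
   Context: $\mathbb F_q$ is the finite field with $q=p^k$ elements. For $s\ge1$, $N_s(f,a)$ is the number of $(x_1,\dots,x_s)\in\mathbb F_q^s$ with $f(x_1)+\cdots+f(x_s)=a$, and $u_s(f,a):=N_s(f,a)-q^{s-1}$. A sequence of integers $\{a_s\}_{s\ge1}$ is a linear recursion sequence if there is $g(x)=\sum_{i=0}^d k_ix^i\in\mathbb Z[x]$ with $k_d\neq0$ such that $k_0a_{j+1}+\cdots+k_da_{j+d+1}=0$ for all $j\ge0$; such $g$ is a generating polynomial. The generating polynomials form a principal ideal of $\mathbb Z[x]$ generated by a polynomial of minimal degree with coprime coefficients (the minimal polynomial); the degree of the sequence is the degree of its minimal polynomial. (It is a fact that $\{u_s(f,a)\}$ is a linear recursion sequence, so $d$ is well defined.) *)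

theory Defs
  imports "HOL-Computational_Algebra.Computational_Algebra"
begin

definition Ncount :: "('a::{finite,field}) poly \<Rightarrow> 'a \<Rightarrow> nat \<Rightarrow> nat" where
  "Ncount f a s = card {xs :: 'a list. length xs = s \<and> (\<Sum>x\<leftarrow>xs. poly f x) = a}"

text \<open>u_s(f,a) = N_s(f,a) - q^(s-1)  (only used for s >= 1)\<close>
definition ucount :: "('a::{finite,field}) poly \<Rightarrow> 'a \<Rightarrow> nat \<Rightarrow> int" where
  "ucount (f :: 'a poly) a s = int (Ncount f a s) - int (card (UNIV :: 'a set)) ^ (s - 1)"

text \<open>g is a generating polynomial of the sequence (a_s)_{s>=1}
  (the value a 0 is irrelevant): k_d \<noteq> 0 and
  k_0 a_{j+1} + ... + k_d a_{j+d+1} = 0 for all j >= 0.\<close>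
definition gen_poly :: "(nat \<Rightarrow> int) \<Rightarrow> int poly \<Rightarrow> bool" where
  "gen_poly a g \<longleftrightarrow> g \<noteq> 0 \<and>
     (\<forall>j. (\<Sum>i\<le>degree g. coeff g i * a (j + i + 1)) = 0)"

definition lin_rec_seq :: "(nat \<Rightarrow> int) \<Rightarrow> bool" where
  "lin_rec_seq a \<longleftrightarrow> (\<exists>g. gen_poly a g)"

definition seq_degree :: "(nat \<Rightarrow> int) \<Rightarrow> nat" where
  "seq_degree a = (LEAST n. \<exists>g. gen_poly a g \<and> degree g = n)"

definition Ngenfun :: "('a::{finite,field}) poly \<Rightarrow> 'a \<Rightarrow> rat fls" where
  "Ngenfun f a = fps_to_fls (Abs_fps (\<lambda>s. if s = 0 then 0 else of_nat (Ncount f a s)))"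

text \<open>Hankel system A X = 0 with A = (u_{i+j-1})_{1<=i,j<=d+1} and
  X = (c_d, ..., c_1, c_0)^T, i.e. X_j = c_{d+1-j}.\<close>
definition hankel_kernel :: "(nat \<Rightarrow> int) \<Rightarrow> nat \<Rightarrow> (nat \<Rightarrow> int) \<Rightarrow> bool" where
  "hankel_kernel u d c \<longleftrightarrow>
     (\<forall>i\<in>{1..d+1}. (\<Sum>j=1..d+1. u (i + j - 1) * c (d + 1 - j)) = 0)"

end

theory Submission
  imports Defs
begin


lemma int_dep:
  fixes v :: "'m \<Rightarrow> 'i \<Rightarrow> int"
  assumes "finite I"
  shows "finite M \<Longrightarrow> card I < card M \<Longrightarrow>
    \<exists>h. (\<exists>m\<in>M. h m \<noteq> 0) \<and> (\<forall>i\<in>I. (\<Sum>m\<in>M. h m * v m i) = 0)"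
  using assms
proof (induction I arbitrary: M v rule: finite_induct)
  case empty
  then obtain m where "m \<in> M" by fastforce
  then show ?case by (rule_tac x="\<lambda>_. 1" in exI) auto
next
  case (insert i0 I)
  show ?case
  proof (cases "\<forall>m\<in>M. v m i0 = 0")
    case True
    from insert.IH[of M v] insert.prems insert.hyps obtain h where
      h: "\<exists>m\<in>M. h m \<noteq> 0" "\<forall>i\<in>I. (\<Sum>m\<in>M. h m * v m i) = 0" by auto
    show ?thesis using h True by (rule_tac x=h in exI) auto
  next
    case False
    then obtain r where r: "r \<in> M" "v r i0 \<noteq> 0" by auto
    define t where "t = v r i0"
    define w where "w m i = t * v m i - v m i0 * v r i" for m i
    have cM: "card I < card (M - {r})" using insert r by auto
    from insert.IH[of "M - {r}" w] cM insert.prems obtain h' where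
      h': "\<exists>m\<in>M-{r}. h' m \<noteq> 0" "\<forall>i\<in>I. (\<Sum>m\<in>M-{r}. h' m * w m i) = 0" by auto
    define h where "h m = (if m = r then - (\<Sum>m'\<in>M-{r}. h' m' * v m' i0) else t * h' m)" for m
    have key: "(\<Sum>m\<in>M. h m * v m i) = (\<Sum>m\<in>M-{r}. h' m * w m i)" for i
    proof -
      have "(\<Sum>m\<in>M. h m * v m i) = h r * v r i + (\<Sum>m\<in>M-{r}. h m * v m i)"
        using r insert.prems by (simp add: sum.remove)
      also have "(\<Sum>m\<in>M-{r}. h m * v m i) = (\<Sum>m\<in>M-{r}. t * h' m * v m i)"
        by (rule sum.cong) (auto simp: h_def)
      finally show ?thesis
        by (simp add: h_def w_def sum_subtractf sum_distrib_left sum_distrib_right algebra_simps)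
    qed
    show ?thesis
    proof (rule exI[of _ h], intro conjI ballI)
      from h' obtain m where "m \<in> M - {r}" "h' m \<noteq> 0" by auto
      then show "\<exists>m\<in>M. h m \<noteq> 0" using r t_def by (rule_tac x=m in bexI) (auto simp: h_def)
    next
      fix i assume "i \<in> insert i0 I"
      then show "(\<Sum>m\<in>M. h m * v m i) = 0"
      proof
        assume "i = i0" then show ?thesis by (simp add: key w_def t_def)
      qed (use key h' in auto)
    qed
  qed
qed



lemma Ncount_Suc:
  fixes f :: "('a::{finite,field}) poly"
  shows "Ncount f b (Suc s) = (\<Sum>x\<in>UNIV. Ncount f (b - poly f x) s)"
proof -
  define S where "S x = {ys :: 'a list. length ys = s \<and> (\<Sum>y\<leftarrow>ys. poly f y) = b - poly f x}" for x
  have fin: "finite (S x)" for x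
  proof -
    have "S x \<subseteq> {ys. set ys \<subseteq> UNIV \<and> length ys = s}" by (auto simp: S_def)
    then show ?thesis using finite_lists_length_eq[of "UNIV :: 'a set" s] finite_subset by auto
  qed
  have eq: "{xs :: 'a list. length xs = Suc s \<and> (\<Sum>x\<leftarrow>xs. poly f x) = b} = (\<Union>x. (\<lambda>ys. x # ys) ` S x)"
  proof (rule set_eqI, rule iffI)
    fix xs :: "'a list" assume "xs \<in> {xs. length xs = Suc s \<and> (\<Sum>x\<leftarrow>xs. poly f x) = b}"
    then obtain x ys where "xs = x # ys" "length ys = s" "poly f x + (\<Sum>y\<leftarrow>ys. poly f y) = b"
      by (cases xs) auto
    then show "xs \<in> (\<Union>x. (\<lambda>ys. x # ys) ` S x)" by (auto simp: S_def algebra_simps)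
  qed (auto simp: S_def)
  have "Ncount f b (Suc s) = card (\<Union>x. (\<lambda>ys. x # ys) ` S x)" by (simp add: Ncount_def eq)
  also have "\<dots> = (\<Sum>x\<in>UNIV. card ((\<lambda>ys. x # ys) ` S x))"
    by (rule card_UN_disjoint) (auto simp: fin)
  also have "\<dots> = (\<Sum>x\<in>UNIV. card (S x))"
    by (rule sum.cong) (auto simp: card_image inj_on_def)
  finally show ?thesis by (simp add: Ncount_def S_def)
qed

lemma ucount_Suc:
  fixes f :: "('a::{finite,field}) poly"
  assumes "s \<ge> 1"
  shows "ucount f b (Suc s) = (\<Sum>x\<in>UNIV. ucount f (b - poly f x) s)"
proof -
  obtain s' where s': "s = Suc s'" using assms by (cases s) auto
  have "int (card (UNIV::'a set)) ^ (Suc s - 1) = (\<Sum>x\<in>(UNIV::'a set). int (card (UNIV::'a set)) ^ (s - 1))"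
    by (simp add: s')
  then show ?thesis
    by (simp add: ucount_def Ncount_Suc sum_subtractf)
qed

lemma ucount_rec:
  fixes f :: "('a::{finite,field}) poly"
  shows "\<exists>h :: nat \<Rightarrow> int. (\<exists>m\<in>{0..card (UNIV::'a set)}. h m \<noteq> 0) \<and>
     (\<forall>t b. (\<Sum>m\<in>{0..card (UNIV::'a set)}. h m * ucount f b (m + 1 + t)) = 0)"
proof -
  let ?q = "card (UNIV::'a set)"
  obtain h :: "nat \<Rightarrow> int" where h: "\<exists>m\<in>{0..?q}. h m \<noteq> 0"
    "\<forall>b\<in>UNIV. (\<Sum>m\<in>{0..?q}. h m * ucount f b (m + 1)) = 0"
    using int_dep[of "UNIV::'a set" "{0..?q}" "\<lambda>m b. ucount f b (m + 1)"] by auto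
  have "(\<Sum>m\<in>{0..?q}. h m * ucount f b (m + 1 + t)) = 0" for t b
  proof (induction t arbitrary: b)
    case 0 then show ?case using h by simp
  next
    case (Suc t)
    have "(\<Sum>m\<in>{0..?q}. h m * ucount f b (m + 1 + Suc t))
        = (\<Sum>m\<in>{0..?q}. \<Sum>x\<in>UNIV. h m * ucount f (b - poly f x) (m + 1 + t))"
      by (rule sum.cong) (auto simp: ucount_Suc sum_distrib_left)
    also have "\<dots> = (\<Sum>x\<in>UNIV. \<Sum>m\<in>{0..?q}. h m * ucount f (b - poly f x) (m + 1 + t))"
      by (rule sum.swap)
    also have "\<dots> = 0" using Suc by simp
    finally show ?case .
  qed
  then show ?thesis using h by blast
qed

lemma lin_rec_u:
  fixes f :: "('a::{finite,field}) poly"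
  shows "\<exists>g. gen_poly (ucount f a) g"
proof -
  let ?q = "card (UNIV::'a set)"
  obtain h :: "nat \<Rightarrow> int" where h: "\<exists>m\<in>{0..?q}. h m \<noteq> 0"
     "\<forall>t b. (\<Sum>m\<in>{0..?q}. h m * ucount f b (m + 1 + t)) = 0"
    using ucount_rec by blast
  define g where "g = (\<Sum>m\<in>{0..?q}. monom (h m) m)"
  have cg: "coeff g i = (if i \<le> ?q then h i else 0)" for i
    by (simp add: g_def coeff_sum coeff_monom)
  have g0: "g \<noteq> 0" using h(1) cg by (metis atLeastAtMost_iff coeff_0)
  have dg: "degree g \<le> ?q" by (rule degree_le) (auto simp: cg)
  have "(\<Sum>i\<le>degree g. coeff g i * ucount f a (j + i + 1)) = 0" for j
  proof -
    have "(\<Sum>i\<le>degree g. coeff g i * ucount f a (j + i + 1)) = (\<Sum>i\<in>{0..?q}. coeff g i * ucount f a (j + i + 1))"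
      by (rule sum.mono_neutral_left) (use dg in \<open>auto simp: coeff_eq_0\<close>)
    also have "\<dots> = (\<Sum>m\<in>{0..?q}. h m * ucount f a (m + 1 + j))"
      by (rule sum.cong) (auto simp: cg add.commute add.left_commute)
    finally show ?thesis using h(2) by simp
  qed
  then show ?thesis using g0 by (auto simp: gen_poly_def)
qed



lemma hankel_rec:
  fixes u :: "nat \<Rightarrow> int"
  assumes g: "gen_poly u g" "degree g = d" and hk: "hankel_kernel u d c"
  shows "n \<ge> d + 1 \<Longrightarrow> (\<Sum>m\<le>d. c m * u (n - m)) = 0"
proof (induction n rule: less_induct)
  case (less n)
  show ?case
  proof (cases "n \<le> 2 * d + 1")
    case True
    define ii where "ii = n - d"
    have ii: "ii \<in> {1..d+1}" using True less.prems by (auto simp: ii_def)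
    have "(\<Sum>j=1..d+1. u (ii + j - 1) * c (d + 1 - j)) = 0" using hk ii by (auto simp: hankel_kernel_def)
    moreover have "(\<Sum>j=1..d+1. u (ii + j - 1) * c (d + 1 - j)) = (\<Sum>m\<le>d. c m * u (n - m))"
      by (rule sum.reindex_bij_witness[of _ "\<lambda>m. d + 1 - m" "\<lambda>j. d + 1 - j"])
         (use less.prems in \<open>auto simp: ii_def\<close>)
    ultimately show ?thesis by simp
  next
    case False
    let ?k = "coeff g"
    have kd: "?k d \<noteq> 0" using g by (auto simp: gen_poly_def)
    have R: "?k d * u N = - (\<Sum>i<d. ?k i * u (N - d + i))" if "N \<ge> d + 1" for N
    proof -
      have "(\<Sum>i\<le>degree g. coeff g i * u ((N - d - 1) + i + 1)) = 0"
        using g(1) unfolding gen_poly_def by blast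
      moreover have "(\<Sum>i\<le>degree g. coeff g i * u ((N - d - 1) + i + 1)) = (\<Sum>i\<le>d. ?k i * u (N - d + i))"
        using g(2) that by (intro sum.cong refl) (auto intro!: arg_cong[where f=u])
      moreover have "{..d} = insert d {..<d}" by auto
      ultimately show ?thesis using that by (simp add: algebra_simps)
    qed
    have "?k d * (\<Sum>m\<le>d. c m * u (n - m)) = (\<Sum>m\<le>d. c m * (?k d * u (n - m)))"
      by (simp add: sum_distrib_left algebra_simps)
    also have "\<dots> = (\<Sum>m\<le>d. c m * (- (\<Sum>i<d. ?k i * u (n - d + i - m))))"
      using False by (intro sum.cong refl) (auto simp: R intro!: sum.cong arg_cong[where f=u])
    also have "\<dots> = - (\<Sum>i<d. ?k i * (\<Sum>m\<le>d. c m * u (n - d + i - m)))"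
      by (simp add: sum_distrib_left sum_negf algebra_simps sum.swap[of _ "{..<d}"])
    also have "\<dots> = 0"
    proof -
      have "\<forall>i<d. (\<Sum>m\<le>d. c m * u (n - d + i - m)) = 0"
      proof (intro allI impI)
        fix i assume "i < d"
        have "(\<Sum>m\<le>d. c m * u ((n - d + i) - m)) = 0"
          by (rule less.IH) (use False \<open>i < d\<close> in auto)
        then show "(\<Sum>m\<le>d. c m * u (n - d + i - m)) = 0" by simp
      qed
      then show ?thesis by simp
    qed
    finally show ?thesis using kd by simp
  qed
qed

lemma fls_sum_poly:
  assumes "finite A"
  shows "(\<Sum>i\<in>A. of_int (e i) * fls_X ^ i :: rat fls) =
         fps_to_fls (fps_of_poly (\<Sum>i\<in>A. monom (of_int (e i)) i))"
  using assms
proof (induction A rule: finite_induct)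
  case (insert x F)
  then show ?case
    by (simp add: fps_of_poly_add fps_of_poly_monom fls_times_fps_to_fls fps_to_fls_power
        flip: fps_of_int fps_to_fls_of_int)
qed simp



lemma geom_part:
  fixes q :: nat
  defines "G \<equiv> Abs_fps (\<lambda>s. if s = 0 then 0 else (of_nat q :: rat) ^ (s - 1))"
  shows "fps_to_fls G = fls_X / (1 - of_nat q * fls_X)"
proof -
  have "G * (1 - of_nat q * fps_X) = fps_X"
  proof (rule fps_ext)
    fix n
    show "(G * (1 - of_nat q * fps_X)) $ n = fps_X $ n"
      by (cases n; cases "n - 1") (auto simp: G_def algebra_simps fps_of_nat[symmetric])
  qed
  hence "fps_to_fls G * (1 - of_nat q * fls_X) = fls_X"
    by (metis fls_times_fps_to_fls fps_X_to_fls fps_to_fls_minus fps_to_fls_of_nat fps_to_fls_eq_1_iff)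
  moreover have "(1 - of_nat q * fls_X :: rat fls) \<noteq> 0"
  proof
    assume "(1 - of_nat q * fls_X :: rat fls) = 0"
    hence "fls_nth (1 - of_nat q * fls_X :: rat fls) 0 = 0" by simp
    thus False by simp
  qed
  ultimately show ?thesis by (simp add: eq_divide_eq)
qed



lemma conv_int:
  fixes u c :: "nat \<Rightarrow> int"
  assumes g: "gen_poly u g" "degree g = d" and hk: "hankel_kernel u d c"
  shows "(\<Sum>i=0..n. (if i \<le> d then c i else 0) * (if n - i = 0 then 0 else u (n - i)))
       = (if 1 \<le> n \<and> n \<le> d then (\<Sum>kk<n. c kk * u (n - kk)) else 0)"
proof (cases "n = 0")
  case True then show ?thesis by simp
next
  case n0: False
  show ?thesis
  proof (cases "n \<le> d")
    case True
    have "{0..n} = insert n {..<n}" by auto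
    then have "(\<Sum>i=0..n. (if i \<le> d then c i else 0) * (if n - i = 0 then 0 else u (n - i)))
       = (\<Sum>i<n. (if i \<le> d then c i else 0) * (if n - i = 0 then 0 else u (n - i)))"
      by simp
    also have "\<dots> = (\<Sum>kk<n. c kk * u (n - kk))"
      using True by (intro sum.cong) auto
    finally show ?thesis using True n0 by simp
  next
    case False
    have "(\<Sum>i=0..n. (if i \<le> d then c i else 0) * (if n - i = 0 then 0 else u (n - i)))
        = (\<Sum>i\<in>{..d}. (if i \<le> d then c i else 0) * (if n - i = 0 then 0 else u (n - i)))"
      using False by (intro sum.mono_neutral_right) auto
    also have "\<dots> = (\<Sum>m\<le>d. c m * u (n - m))"
      using False by (intro sum.cong) auto
    also have "\<dots> = 0" using hankel_rec[OF g hk] False by simp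
    finally show ?thesis using False by simp
  qed
qed

lemma part3:
  fixes f :: "('a::{finite,field}) poly"
  assumes g: "gen_poly (ucount f a) g" "degree g = d"
    and cnz: "\<exists>i\<le>d. c i \<noteq> 0" and hk: "hankel_kernel (ucount f a) d c"
  shows "Ngenfun f a = fls_X / (1 - of_nat (card (UNIV::'a set)) * fls_X)
     + (\<Sum>i=1..d. of_int (\<Sum>kk<i. c kk * ucount f a (i - kk)) * fls_X ^ i)
       / (\<Sum>i=0..d. of_int (c i) * fls_X ^ i)"
proof -
  define q where "q = card (UNIV::'a set)"
  define u where "u = ucount f a"
  define G where "G = Abs_fps (\<lambda>s. if s = 0 then 0 else (of_nat q :: rat) ^ (s - 1))"
  define U where "U = Abs_fps (\<lambda>s. if s = 0 then 0 else (of_int (u s) :: rat))"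
  define Cp :: "rat poly" where "Cp = (\<Sum>i=0..d. monom (of_int (c i)) i)"
  define Pp :: "rat poly" where "Pp = (\<Sum>i=1..d. monom (of_int (\<Sum>kk<i. c kk * u (i - kk))) i)"
  have cC: "coeff Cp i = (if i \<le> d then of_int (c i) else 0)" for i
    by (simp add: Cp_def coeff_sum coeff_monom)
  have cP: "coeff Pp i = (if 1 \<le> i \<and> i \<le> d then of_int (\<Sum>kk<i. c kk * u (i - kk)) else 0)" for i
    by (simp add: Pp_def coeff_sum coeff_monom)
  have Cp0: "Cp \<noteq> 0" using cnz cC by (metis coeff_0 of_int_eq_0_iff)
  have N: "Ngenfun f a = fps_to_fls G + fps_to_fls U"
  proof -
    have "Abs_fps (\<lambda>s. if s = 0 then 0 else of_nat (Ncount f a s)) = G + U"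
      by (rule fps_ext) (simp add: G_def U_def u_def q_def ucount_def)
    then show ?thesis by (simp add: Ngenfun_def)
  qed
  have CU: "fps_of_poly Cp * U = fps_of_poly Pp"
  proof (rule fps_ext)
    fix n
    have "(fps_of_poly Cp * U) $ n
        = of_int (\<Sum>i=0..n. (if i \<le> d then c i else 0) * (if n - i = 0 then 0 else u (n - i)))"
      by (simp add: fps_mult_nth cC U_def of_int_sum, intro sum.cong) auto
    also have "\<dots> = fps_of_poly Pp $ n"
      using conv_int[OF g[folded u_def] hk[folded u_def], of n] by (simp add: cP)
    finally show "(fps_of_poly Cp * U) $ n = fps_of_poly Pp $ n" .
  qed
  have CF: "fps_to_fls (fps_of_poly Cp) \<noteq> 0" using Cp0 by (simp add: fps_of_poly_eq_iff[of _ 0, simplified])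
  have "fps_to_fls U = fps_to_fls (fps_of_poly Pp) / fps_to_fls (fps_of_poly Cp)"
    using CU CF by (simp add: eq_divide_eq fls_times_fps_to_fls[symmetric] mult.commute)
  moreover have "(\<Sum>i=0..d. of_int (c i) * fls_X ^ i :: rat fls) = fps_to_fls (fps_of_poly Cp)"
    unfolding Cp_def by (rule fls_sum_poly) simp
  moreover have "(\<Sum>i=1..d. of_int (\<Sum>kk<i. c kk * ucount f a (i - kk)) * fls_X ^ i :: rat fls)
       = fps_to_fls (fps_of_poly Pp)"
    unfolding Pp_def u_def by (rule fls_sum_poly) simp
  ultimately show ?thesis using N geom_part[of q] by (simp add: G_def q_def)
qed



lemma ffm: "fps_to_fls (fps_of_poly (A * B)) = fps_to_fls (fps_of_poly A) * (fps_to_fls (fps_of_poly B) :: rat fls)"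
  by (simp add: fps_of_poly_mult fls_times_fps_to_fls)
lemma ffa: "fps_to_fls (fps_of_poly (A + B)) = fps_to_fls (fps_of_poly A) + (fps_to_fls (fps_of_poly B) :: rat fls)"
  by (simp add: fps_of_poly_add)

lemma part1:
  fixes e c :: "nat \<Rightarrow> int" and q :: nat and N :: "rat fls"
  assumes N: "N = fls_X / (1 - of_nat q * fls_X)
     + (\<Sum>i=1..d. of_int (e i) * fls_X ^ i) / (\<Sum>i=0..d. of_int (c i) * fls_X ^ i)"
    and cnz: "\<exists>i\<le>d. c i \<noteq> 0"
  shows "\<exists>P Q :: rat poly. Q \<noteq> 0 \<and> N = fps_to_fls (fps_of_poly P) / fps_to_fls (fps_of_poly Q)"
proof -
  define Cp :: "rat poly" where "Cp = (\<Sum>i=0..d. monom (of_int (c i)) i)"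
  define Pp :: "rat poly" where "Pp = (\<Sum>i=1..d. monom (of_int (e i)) i)"
  define Dp :: "rat poly" where "Dp = [:1, - of_nat q:]"
  have cC: "coeff Cp i = (if i \<le> d then of_int (c i) else 0)" for i
    by (simp add: Cp_def coeff_sum coeff_monom)
  have Cp0: "Cp \<noteq> 0" using cnz cC by (metis coeff_0 of_int_eq_0_iff)
  have Dp0: "Dp \<noteq> 0" by (simp add: Dp_def)
  have Dfl: "fps_to_fls (fps_of_poly Dp) = 1 - of_nat q * fls_X"
    by (simp add: Dp_def fps_of_poly_pCons fls_times_fps_to_fls fps_of_nat[symmetric] fps_to_fls_of_nat
        flip: fps_const_neg fls_of_nat)
  have Xfl: "fps_to_fls (fps_of_poly [:0, 1:]) = (fls_X :: rat fls)" by simp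
  have C: "(\<Sum>i=0..d. of_int (c i) * fls_X ^ i :: rat fls) = fps_to_fls (fps_of_poly Cp)"
    unfolding Cp_def by (rule fls_sum_poly) simp
  have P: "(\<Sum>i=1..d. of_int (e i) * fls_X ^ i :: rat fls) = fps_to_fls (fps_of_poly Pp)"
    unfolding Pp_def by (rule fls_sum_poly) simp
  have nz1: "fps_to_fls (fps_of_poly Cp) \<noteq> 0" using Cp0 by (simp add: fps_of_poly_eq_iff[of _ 0, simplified])
  have nz2: "fps_to_fls (fps_of_poly Dp) \<noteq> 0" using Dp0 by (simp add: fps_of_poly_eq_iff[of _ 0, simplified])
  have "N = fps_to_fls (fps_of_poly [:0, 1:]) / fps_to_fls (fps_of_poly Dp) + fps_to_fls (fps_of_poly Pp) / fps_to_fls (fps_of_poly Cp)"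
    unfolding N C P Dfl[symmetric] by (simp only: Xfl)
  also have "\<dots> = fps_to_fls (fps_of_poly ([:0, 1:] * Cp + Pp * Dp)) / fps_to_fls (fps_of_poly (Dp * Cp))"
    unfolding add_frac_eq[OF nz2 nz1]
    unfolding ffa ffm ..
  finally have "N = fps_to_fls (fps_of_poly ([:0, 1:] * Cp + Pp * Dp)) / fps_to_fls (fps_of_poly (Dp * Cp))" .
  moreover have "Dp * Cp \<noteq> 0" using Cp0 Dp0 by simp
  ultimately show ?thesis by (intro exI conjI)
qed



theorem theorem1p2:
  fixes f :: "('a::{finite,field}) poly" and a :: 'a and p k :: nat
  assumes "prime p" and "card (UNIV :: 'a set) = p ^ k"
  defines "q \<equiv> card (UNIV :: 'a set)"
  defines "u \<equiv> ucount f a"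
  defines "d \<equiv> seq_degree u"
  shows "(\<exists>P Q :: rat poly. Q \<noteq> 0 \<and>
            Ngenfun f a = fps_to_fls (fps_of_poly P) / fps_to_fls (fps_of_poly Q))
       \<and> (\<exists>c :: nat \<Rightarrow> int. (\<exists>i\<le>d. c i \<noteq> 0) \<and> hankel_kernel u d c)
       \<and> (\<forall>c :: nat \<Rightarrow> int. (\<exists>i\<le>d. c i \<noteq> 0) \<and> hankel_kernel u d c \<longrightarrow>
            Ngenfun f a =
              fls_X / (1 - of_nat q * fls_X)
              + (\<Sum>i=1..d. of_int (\<Sum>kk<i. c kk * u (i - kk)) * fls_X ^ i)
                / (\<Sum>i=0..d. of_int (c i) * fls_X ^ i))"
proof -
  obtain g0 where g0: "gen_poly u g0" using lin_rec_u[of f a] unfolding u_def by blast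
  have "\<exists>g. gen_poly u g \<and> degree g = d"
    unfolding d_def seq_degree_def by (rule LeastI_ex) (use g0 in blast)
  then obtain g where g: "gen_poly u g" "degree g = d" by blast
  define c0 where "c0 m = coeff g (d - m)" for m
  have c0nz: "\<exists>i\<le>d. c0 i \<noteq> 0"
  proof -
    have "g \<noteq> 0" using g by (simp add: gen_poly_def)
    then have "c0 0 \<noteq> 0" using g by (metis c0_def diff_zero leading_coeff_0_iff)
    then show ?thesis by blast
  qed
  have hk0: "hankel_kernel u d c0"
    unfolding hankel_kernel_def
  proof
    fix ii assume ii: "ii \<in> {1..d+1}"
    have "(\<Sum>i\<le>degree g. coeff g i * u ((ii - 1) + i + 1)) = 0"
      using g(1) unfolding gen_poly_def by blast
    moreover have "(\<Sum>i\<le>degree g. coeff g i * u ((ii - 1) + i + 1)) = (\<Sum>j=1..d+1. u (ii + j - 1) * c0 (d + 1 - j))"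
      by (rule sum.reindex_bij_witness[of _ "\<lambda>j. j - 1" "\<lambda>i. i + 1"])
         (use ii g(2) in \<open>auto simp: c0_def\<close>)
    ultimately show "(\<Sum>j=1..d+1. u (ii + j - 1) * c0 (d + 1 - j)) = 0" by simp
  qed
  have P3: "\<forall>c :: nat \<Rightarrow> int. (\<exists>i\<le>d. c i \<noteq> 0) \<and> hankel_kernel u d c \<longrightarrow>
            Ngenfun f a =
              fls_X / (1 - of_nat q * fls_X)
              + (\<Sum>i=1..d. of_int (\<Sum>kk<i. c kk * u (i - kk)) * fls_X ^ i)
                / (\<Sum>i=0..d. of_int (c i) * fls_X ^ i)"
    using part3[of f a g d] g unfolding u_def q_def by blast
  have P1: "\<exists>P Q :: rat poly. Q \<noteq> 0 \<and>
            Ngenfun f a = fps_to_fls (fps_of_poly P) / fps_to_fls (fps_of_poly Q)"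
    using P3 c0nz hk0 by (intro part1[where q=q and d=d and c=c0 and e="\<lambda>i. \<Sum>kk<i. c0 kk * u (i - kk)"]) auto
  show ?thesis using P1 P3 c0nz hk0 by blast
qed

end
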